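(* Let $q$ be a prime power, $k,m,n$ positive integers, and let $U$ be an $[n,k]_{q^m/q}$ system. Then $U$ is $(k-2,\,n-m-1)_q$-evasive if and only if $U$ is cutting.
   Context: An $[n,k]_{q^m/q}$ system is an $\mathbb F_q$-subspace $U$ of $\mathbb F_{q^m}^k$ with $\dim_{\mathbb F_q}(U)=n$ and $\langle U\rangle_{\mathbb F_{q^m}}=\mathbb F_{q^m}^k$. $U$ is $(h,r)_q$-evasive if $\dim_{\mathbb F_q}(U\cap H)\le r$ for every $\mathbb F_{q^m}$-subspace $H$ of $\mathbb F_{q^m}^k$ with $\dim_{\mathbb F_{q^m}}(H)=h$. $U$ is called cutting (a linear cutting blocking set) if for every $\mathbb F_{q^m}$-hyperplane $H$ of $\mathbb F_{q^m}^k$ one has $\langle H\cap U\rangle_{\mathbb F_{q^m}}=H$. *)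

theory Defs
  imports "HOL-Analysis.Analysis" "HOL-Computational_Algebra.Primes"
begin

text \<open>Linear algebra over a subset K of scalars (K = a subfield F_q, or K = UNIV = F_{q^m})
  in the space 'a^'k, where 'a plays the role of F_{q^m} and CARD('k) = k.\<close>

definition is_subfield :: "'a::field set \<Rightarrow> bool" where
  "is_subfield F \<longleftrightarrow> 0 \<in> F \<and> 1 \<in> F \<and> (\<forall>x\<in>F. \<forall>y\<in>F. x + y \<in> F \<and> x * y \<in> F)
     \<and> (\<forall>x\<in>F. - x \<in> F) \<and> (\<forall>x\<in>F. x \<noteq> 0 \<longrightarrow> inverse x \<in> F)"

definition lin_span :: "'a::field set \<Rightarrow> ('a^'k) set \<Rightarrow> ('a^'k) set" where
  "lin_span K A = {v. \<exists>S c. finite S \<and> S \<subseteq> A \<and> (\<forall>x\<in>S. c x \<in> K) \<and> v = (\<Sum>x\<in>S. c x *s x)}"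

definition lin_indep :: "'a::field set \<Rightarrow> ('a^'k) set \<Rightarrow> bool" where
  "lin_indep K B \<longleftrightarrow> finite B \<and>
     (\<forall>c. (\<forall>x\<in>B. c x \<in> K) \<and> (\<Sum>x\<in>B. c x *s x) = 0 \<longrightarrow> (\<forall>x\<in>B. c x = 0))"

definition lin_subspace :: "'a::field set \<Rightarrow> ('a^'k) set \<Rightarrow> bool" where
  "lin_subspace K U \<longleftrightarrow> 0 \<in> U \<and> (\<forall>x\<in>U. \<forall>y\<in>U. x + y \<in> U) \<and> (\<forall>c\<in>K. \<forall>x\<in>U. c *s x \<in> U)"

definition lin_dim :: "'a::field set \<Rightarrow> ('a^'k) set \<Rightarrow> nat" where
  "lin_dim K U = (SOME n. \<exists>B. B \<subseteq> U \<and> lin_indep K B \<and> lin_span K B = U \<and> card B = n)"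

definition is_system :: "'a::field set \<Rightarrow> nat \<Rightarrow> ('a^'k) set \<Rightarrow> bool" where
  "is_system F n U \<longleftrightarrow> lin_subspace F U \<and> lin_dim F U = n \<and> lin_span UNIV U = UNIV"

definition evasive :: "'a::field set \<Rightarrow> int \<Rightarrow> int \<Rightarrow> ('a^'k) set \<Rightarrow> bool" where
  "evasive F h r U \<longleftrightarrow> (\<forall>H. lin_subspace UNIV H \<and> int (lin_dim UNIV H) = h
      \<longrightarrow> int (lin_dim F (U \<inter> H)) \<le> r)"

definition cutting :: "('a::field^'k) set \<Rightarrow> bool" where
  "cutting U \<longleftrightarrow> (\<forall>H. lin_subspace UNIV H \<and> int (lin_dim UNIV H) = int CARD('k) - 1
      \<longrightarrow> lin_span UNIV (H \<inter> U) = H)"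

end

theory Submission
  imports Defs
begin


lemma sf: assumes K: "is_subfield K"
  shows "0 \<in> K" "1 \<in> K" "x \<in> K \<Longrightarrow> y \<in> K \<Longrightarrow> x + y \<in> K"
    "x \<in> K \<Longrightarrow> y \<in> K \<Longrightarrow> x * y \<in> K" "x \<in> K \<Longrightarrow> - x \<in> K"
    "x \<in> K \<Longrightarrow> y \<in> K \<Longrightarrow> x - y \<in> K"
    "x \<in> K \<Longrightarrow> inverse x \<in> K"
    "x \<in> K \<Longrightarrow> y \<in> K \<Longrightarrow> x / y \<in> K"
proof -
  have a: "0 \<in> K" "1 \<in> K" "\<And>x y. x \<in> K \<Longrightarrow> y \<in> K \<Longrightarrow> x + y \<in> K"
    "\<And>x y. x \<in> K \<Longrightarrow> y \<in> K \<Longrightarrow> x * y \<in> K" "\<And>x. x \<in> K \<Longrightarrow> - x \<in> K"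
    "\<And>x. x \<in> K \<Longrightarrow> x \<noteq> 0 \<Longrightarrow> inverse x \<in> K"
    using K by (simp_all add: is_subfield_def)
  have inv: "\<And>x. x \<in> K \<Longrightarrow> inverse x \<in> K"
  proof -
    fix x :: 'a assume "x \<in> K"
    show "inverse x \<in> K"
    proof (cases "x = 0")
      case True then show ?thesis using a(1) by simp
    next
      case False then show ?thesis using a(6) \<open>x \<in> K\<close> by blast
    qed
  qed
  show "0 \<in> K" "1 \<in> K" by (rule a(1), rule a(2))
  show "x \<in> K \<Longrightarrow> y \<in> K \<Longrightarrow> x + y \<in> K" by (rule a(3))
  show "x \<in> K \<Longrightarrow> y \<in> K \<Longrightarrow> x * y \<in> K" by (rule a(4))
  show "x \<in> K \<Longrightarrow> - x \<in> K" by (rule a(5))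
  show "x \<in> K \<Longrightarrow> y \<in> K \<Longrightarrow> x - y \<in> K"
    unfolding diff_conv_add_uminus by (rule a(3)) (auto intro: a(5))
  show "x \<in> K \<Longrightarrow> inverse x \<in> K" by (rule inv)
  show "x \<in> K \<Longrightarrow> y \<in> K \<Longrightarrow> x / y \<in> K"
    unfolding divide_inverse by (rule a(4)) (auto intro: inv)
qed

lemma sf_UNIV: "is_subfield UNIV" by (simp add: is_subfield_def)

lemma sub_UNIV: "lin_subspace UNIV V \<Longrightarrow> lin_subspace K V"
  by (simp add: lin_subspace_def)

lemma sub_Int: "lin_subspace K V \<Longrightarrow> lin_subspace K W \<Longrightarrow> lin_subspace K (V \<inter> W)"
  by (simp add: lin_subspace_def)

lemma sub_diff: fixes V :: "('a::field^'k) set" assumes "is_subfield K" "lin_subspace K V" "x \<in> V" "y \<in> V"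
  shows "x - y \<in> V"
proof -
  have "x - y = x + (-1) *s y" by (simp add: vec_eq_iff)
  moreover have "(-1::'a) \<in> K" using sf(2,5)[OF assms(1)] by blast
  then have "(-1::'a) *s y \<in> V" using assms unfolding lin_subspace_def by blast
  ultimately show ?thesis using assms unfolding lin_subspace_def by auto
qed

lemma sub_sum: assumes "lin_subspace K V" "finite S"
  shows "S \<subseteq> V \<Longrightarrow> (\<forall>x\<in>S. c x \<in> K) \<Longrightarrow> (\<Sum>x\<in>S. c x *s x) \<in> V"
  using assms(2)
proof (induction S rule: finite_induct)
  case empty then show ?case using assms(1) by (simp add: lin_subspace_def)
next
  case (insert x F)
  then show ?case using assms(1) by (simp add: lin_subspace_def)
qed

lemma span_subset: assumes "lin_subspace K V" "A \<subseteq> V" shows "lin_span K A \<subseteq> V"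
  using sub_sum[OF assms(1)] assms(2) unfolding lin_span_def by blast

lemma span_superset: assumes "is_subfield K" shows "A \<subseteq> lin_span K A"
proof
  fix x assume "x \<in> A"
  then show "x \<in> lin_span K A" unfolding lin_span_def
    by (intro CollectI exI[of _ "{x}"] exI[of _ "\<lambda>_. 1"]) (simp add: sf[OF assms])
qed

lemma smult_sum: "(c::'a::field) *s (\<Sum>x\<in>S. f x) = (\<Sum>x\<in>S. c *s f x)"
  by (simp add: vec_eq_iff sum_distrib_left)

lemma span_subspace: assumes "is_subfield K" shows "lin_subspace K (lin_span K A)"
  unfolding lin_subspace_def
proof (intro conjI ballI)
  show "0 \<in> lin_span K A" unfolding lin_span_def
    by (intro CollectI exI[of _ "{}"]) auto
next
  fix x y assume "x \<in> lin_span K A" "y \<in> lin_span K A"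
  then obtain S c T d where S: "finite S" "S \<subseteq> A" "\<forall>x\<in>S. c x \<in> K" "x = (\<Sum>x\<in>S. c x *s x)"
    and T: "finite T" "T \<subseteq> A" "\<forall>x\<in>T. d x \<in> K" "y = (\<Sum>x\<in>T. d x *s x)"
    unfolding lin_span_def by blast
  define e where "e z = (if z \<in> S then c z else 0) + (if z \<in> T then d z else 0)" for z
  have "(\<Sum>z\<in>S \<union> T. e z *s z) = (\<Sum>z\<in>S \<union> T. (if z \<in> S then c z else 0) *s z)
     + (\<Sum>z\<in>S \<union> T. (if z \<in> T then d z else 0) *s z)"
    unfolding e_def by (simp add: vector_sadd_rdistrib sum.distrib)
  also have "(\<Sum>z\<in>S \<union> T. (if z \<in> S then c z else 0) *s z) = (\<Sum>z\<in>S \<union> T. (if z \<in> S then c z *s z else 0))"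
    by (intro sum.cong) auto
  also have "\<dots> = x" using S T by (simp add: sum.inter_restrict[symmetric] Int_absorb1)
  also have "(\<Sum>z\<in>S \<union> T. (if z \<in> T then d z else 0) *s z) = (\<Sum>z\<in>S \<union> T. (if z \<in> T then d z *s z else 0))"
    by (intro sum.cong) auto
  also have "\<dots> = y" using S T by (simp add: sum.inter_restrict[symmetric] Int_absorb2)
  finally have "x + y = (\<Sum>z\<in>S \<union> T. e z *s z)" by simp
  moreover have "\<forall>z\<in>S \<union> T. e z \<in> K" using S T sf[OF assms] unfolding e_def by auto
  ultimately show "x + y \<in> lin_span K A" unfolding lin_span_def using S T
    by (intro CollectI exI[of _ "S \<union> T"] exI[of _ e]) auto
next
  fix a x assume "a \<in> K" "x \<in> lin_span K A"
  then obtain S c where S: "finite S" "S \<subseteq> A" "\<forall>x\<in>S. c x \<in> K" "x = (\<Sum>x\<in>S. c x *s x)"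
    unfolding lin_span_def by blast
  have "a *s x = (\<Sum>z\<in>S. (a * c z) *s z)" using S by (simp add: smult_sum vector_smult_assoc)
  then show "a *s x \<in> lin_span K A" unfolding lin_span_def using S \<open>a \<in> K\<close> sf[OF assms]
    by (intro CollectI exI[of _ S] exI[of _ "\<lambda>z. a * c z"]) auto
qed



lemma indep_insert:
  fixes B :: "('a::field^'k) set"
  assumes K: "is_subfield K" and B: "lin_indep K B" and v: "v \<notin> lin_span K B"
  shows "lin_indep K (insert v B)"
proof -
  have fin: "finite B" using B unfolding lin_indep_def by blast
  have vB: "v \<notin> B" using v span_superset[OF K] by blast
  show ?thesis unfolding lin_indep_def
  proof (intro conjI allI impI)
    show "finite (insert v B)" using fin by simp
    fix c assume c: "(\<forall>x\<in>insert v B. c x \<in> K) \<and> (\<Sum>x\<in>insert v B. c x *s x) = 0"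
    then have eq: "c v *s v + (\<Sum>x\<in>B. c x *s x) = 0" using fin vB by simp
    have cv: "c v = 0"
    proof (rule ccontr)
      assume nz: "c v \<noteq> 0"
      have "v = inverse (c v) *s (c v *s v)" using nz by (simp add: vector_smult_assoc)
      also have "c v *s v = - (\<Sum>x\<in>B. c x *s x)" using eq by (simp add: eq_neg_iff_add_eq_0)
      also have "inverse (c v) *s - (\<Sum>x\<in>B. c x *s x) = (\<Sum>x\<in>B. (- inverse (c v) * c x) *s x)"
        by (simp add: vec_eq_iff sum_distrib_left sum_negf mult.assoc)
      finally have "v = (\<Sum>x\<in>B. (- inverse (c v) * c x) *s x)" .
      moreover have "\<forall>x\<in>B. - inverse (c v) * c x \<in> K" using c sf[OF K] by auto
      ultimately have "v \<in> lin_span K B" unfolding lin_span_def using fin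
        by (intro CollectI exI[of _ B] exI[of _ "\<lambda>x. - inverse (c v) * c x"]) auto
      then show False using v by simp
    qed
    then have "(\<Sum>x\<in>B. c x *s x) = 0" using eq by simp
    then have "\<forall>x\<in>B. c x = 0" using B c unfolding lin_indep_def by blast
    then show "\<forall>x\<in>insert v B. c x = 0" using cv by simp
  qed
qed

lemma exists_basis:
  fixes V :: "('a::{field,finite}^'k) set"
  assumes K: "is_subfield K" and V: "lin_subspace K V"
  shows "\<exists>B. B \<subseteq> V \<and> lin_indep K B \<and> lin_span K B = V"
proof -
  define I where "I = {B. B \<subseteq> V \<and> lin_indep K B}"
  have finI: "finite I" unfolding I_def by (rule finite_subset[of _ "Pow V"]) auto
  have "{} \<in> I" unfolding I_def lin_indep_def by simp
  define M where "M = Max (card ` I)"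
  have "M \<in> card ` I" unfolding M_def using finI \<open>{} \<in> I\<close> by (intro Max_in) auto
  then obtain B where BI: "B \<in> I" and cB: "card B = M" by blast
  have mx: "card B' \<le> card B" if "B' \<in> I" for B'
    using cB finI that unfolding M_def by (simp add: Max_ge)
  have BV: "B \<subseteq> V" and Bi: "lin_indep K B" using BI by (auto simp: I_def)
  have "V \<subseteq> lin_span K B"
  proof
    fix v assume vV: "v \<in> V"
    show "v \<in> lin_span K B"
    proof (rule ccontr)
      assume nv: "v \<notin> lin_span K B"
      then have "insert v B \<in> I" using indep_insert[OF K Bi nv] BV vV by (auto simp: I_def)
      moreover have "v \<notin> B" using nv span_superset[OF K] by blast
      moreover have "finite B" using Bi unfolding lin_indep_def by blast
      ultimately show False using mx[of "insert v B"] by simp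
    qed
  qed
  then show ?thesis using span_subset[OF V BV] BV Bi by blast
qed

lemma card_basis:
  fixes B :: "('a::field^'k) set"
  assumes K: "is_subfield K" and B: "lin_indep K B" and V: "lin_span K B = V"
  shows "card V = card K ^ card B"
proof -
  have fin: "finite B" using B unfolding lin_indep_def by blast
  define f where "f c = (\<Sum>x\<in>B. c x *s x)" for c
  have "bij_betw f (PiE B (\<lambda>_. K)) V"
    unfolding bij_betw_def
  proof (intro conjI)
    show "inj_on f (PiE B (\<lambda>_. K))"
    proof (rule inj_onI)
      fix c d assume c: "c \<in> PiE B (\<lambda>_. K)" and d: "d \<in> PiE B (\<lambda>_. K)" and e: "f c = f d"
      have "(\<Sum>x\<in>B. (c x - d x) *s x) = f c - f d"
        unfolding f_def by (simp add: vector_sub_rdistrib sum_subtractf)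
      then have s0: "(\<Sum>x\<in>B. (c x - d x) *s x) = 0" using e by simp
      have cK: "\<forall>x\<in>B. c x - d x \<in> K" using c d sf[OF K] by (auto simp: PiE_iff)
      have I: "\<And>f. (\<forall>x\<in>B. f x \<in> K) \<Longrightarrow> (\<Sum>x\<in>B. f x *s x) = 0 \<Longrightarrow> (\<forall>x\<in>B. f x = 0)"
        using B unfolding lin_indep_def by blast
      have "\<forall>x\<in>B. c x - d x = 0" by (rule I[OF cK s0])
      then show "c = d" using c d by (intro extensionalityI[of _ B]) (auto simp: PiE_iff)
    qed
    show "f ` PiE B (\<lambda>_. K) = V"
    proof
      show "f ` PiE B (\<lambda>_. K) \<subseteq> V"
      proof
        fix v assume "v \<in> f ` PiE B (\<lambda>_. K)"
        then obtain c where c: "c \<in> PiE B (\<lambda>_. K)" "v = f c" by blast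
        have "\<forall>x\<in>B. c x \<in> K" using c(1) by (simp add: PiE_iff)
        then have "f c \<in> lin_span K B" unfolding lin_span_def f_def using fin
          by (intro CollectI exI[of _ B] exI[of _ c]) simp
        then show "v \<in> V" using c(2) V by simp
      qed
      show "V \<subseteq> f ` PiE B (\<lambda>_. K)"
      proof
        fix v assume "v \<in> V"
        then obtain S d where S: "finite S" "S \<subseteq> B" "\<forall>x\<in>S. d x \<in> K" "v = (\<Sum>x\<in>S. d x *s x)"
          using V unfolding lin_span_def by blast
        define c where "c = restrict (\<lambda>x. if x \<in> S then d x else 0) B"
        have cP: "c \<in> PiE B (\<lambda>_. K)" using S sf[OF K] by (auto simp: c_def PiE_iff)
        have "f c = (\<Sum>x\<in>B. (if x \<in> S then d x *s x else 0))"
          unfolding f_def c_def by (intro sum.cong) auto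
        also have "\<dots> = (\<Sum>x\<in>B \<inter> S. d x *s x)" using fin by (simp add: sum.inter_restrict)
        also have "B \<inter> S = S" using S by blast
        finally have "f c = v" using S by simp
        then show "v \<in> f ` PiE B (\<lambda>_. K)" using cP by blast
      qed
    qed
  qed
  then have "card V = card (PiE B (\<lambda>_. K))" by (simp add: bij_betw_same_card)
  also have "\<dots> = card K ^ card B" using fin by (simp add: card_PiE)
  finally show ?thesis .
qed

lemma card_sub:
  fixes V :: "('a::{field,finite}^'k) set"
  assumes K: "is_subfield K" and V: "lin_subspace K V"
  shows "card V = card K ^ lin_dim K V"
proof -
  obtain B where B: "B \<subseteq> V" "lin_indep K B" "lin_span K B = V" using exists_basis[OF K V] by blast
  have ex: "\<exists>n. \<exists>B. B \<subseteq> V \<and> lin_indep K B \<and> lin_span K B = V \<and> card B = n" using B by blast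
  have "\<exists>B. B \<subseteq> V \<and> lin_indep K B \<and> lin_span K B = V \<and> card B = lin_dim K V"
    unfolding lin_dim_def by (rule someI_ex[OF ex])
  then obtain B' where "lin_indep K B'" "lin_span K B' = V" "card B' = lin_dim K V" by blast
  then show ?thesis using card_basis[OF K, of B' V] by simp
qed

lemma card_sf: fixes K :: "'a::{field,finite} set" assumes "is_subfield K" shows "2 \<le> card K"
proof -
  have "{0,1} \<subseteq> K" using sf[OF assms] by auto
  then have "card {0::'a,1} \<le> card K" by (intro card_mono) auto
  then show ?thesis by simp
qed



definition addl :: "('a::field^'k) set \<Rightarrow> 'a^'k \<Rightarrow> ('a^'k) set" where
  "addl S w = {s + a *s w | s a. s \<in> S}"

lemma addl_sub: assumes S: "lin_subspace UNIV S" shows "lin_subspace UNIV (addl S w)"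
  unfolding lin_subspace_def
proof (intro conjI ballI)
  show "0 \<in> addl S w" unfolding addl_def using S
    by (intro CollectI exI[of _ 0] exI[of _ "0::'a"]) (auto simp: lin_subspace_def)
next
  fix x y assume "x \<in> addl S w" "y \<in> addl S w"
  then obtain s a s' b where "s \<in> S" "x = s + a *s w" "s' \<in> S" "y = s' + b *s w"
    unfolding addl_def by blast
  moreover have "x + y = (s + s') + (a + b) *s w" using calculation
    by (simp add: vec_eq_iff algebra_simps)
  ultimately show "x + y \<in> addl S w" using S unfolding addl_def lin_subspace_def by blast
next
  fix c x assume "x \<in> addl S w"
  then obtain s a where "s \<in> S" "x = s + a *s w" unfolding addl_def by blast
  moreover have "c *s x = c *s s + (c * a) *s w" using calculation
    by (simp add: vec_eq_iff algebra_simps)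
  ultimately show "c *s x \<in> addl S w" using S unfolding addl_def lin_subspace_def by blast
qed

lemma addl_sup: assumes S: "lin_subspace UNIV S" shows "S \<subseteq> addl S w" "w \<in> addl S w"
proof -
  show "S \<subseteq> addl S w" unfolding addl_def by force
  have "w = 0 + 1 *s w" by simp
  then show "w \<in> addl S w" using S unfolding addl_def lin_subspace_def by blast
qed

lemma addl_le: assumes "lin_subspace UNIV H" "S \<subseteq> H" "w \<in> H" shows "addl S w \<subseteq> H"
  using assms unfolding addl_def lin_subspace_def by blast

lemma addl_card:
  fixes S :: "('a::{field,finite}^'k) set"
  assumes S: "lin_subspace UNIV S" and w: "w \<notin> S"
  shows "card (addl S w) = card S * CARD('a)"
proof -
  define g where "g = (\<lambda>(s::'a^'k, a::'a). s + a *s w)"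
  have "inj_on g (S \<times> UNIV)"
  proof (rule inj_onI, clarsimp simp: g_def)
    fix s a s' b assume s: "s \<in> S" "s' \<in> S" and e: "s + a *s w = s' + b *s w"
    have ab: "a = b"
    proof (rule ccontr)
      assume "a \<noteq> b"
      have "(a - b) *s w = (s + a *s w) - b *s w - s" by (simp add: vec_eq_iff algebra_simps)
      also have "\<dots> = s' - s" unfolding e by simp
      finally have eqab: "(a - b) *s w = s' - s" .
      have "inverse (a - b) *s ((a - b) *s w) = w" using \<open>a \<noteq> b\<close> by (simp only: vector_smult_assoc) simp
      then have "w = inverse (a - b) *s (s' - s)" using eqab by metis
      moreover have "s' - s \<in> S" using sub_diff[OF sf_UNIV S] s by blast
      ultimately have "w \<in> S" using S unfolding lin_subspace_def by blast
      then show False using w by simp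
    qed
    then show "s = s' \<and> a = b" using e by simp
  qed
  moreover have "addl S w = g ` (S \<times> UNIV)" unfolding addl_def g_def by auto
  ultimately have "card (addl S w) = card (S \<times> (UNIV::'a set))" by (simp add: card_image)
  then show ?thesis by (simp add: card_cartesian_product)
qed

lemma chain:
  fixes S H :: "('a::{field,finite}^'k) set"
  assumes S: "lin_subspace UNIV S" and H: "lin_subspace UNIV H" and SH: "S \<subseteq> H"
    and cS: "card S = CARD('a) ^ a" and cH: "card H = CARD('a) ^ b"
  shows "j = a + d \<Longrightarrow> j \<le> b \<Longrightarrow> \<exists>P. lin_subspace UNIV P \<and> S \<subseteq> P \<and> P \<subseteq> H \<and> card P = CARD('a) ^ j"
proof (induction d arbitrary: j)
  case 0
  then have "j = a" by simp
  then show ?case using S SH cS by blast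
next
  case (Suc d)
  then obtain P where P: "lin_subspace UNIV P" "S \<subseteq> P" "P \<subseteq> H" "card P = CARD('a) ^ (a + d)" by auto
  have Q2: "2 \<le> CARD('a)" using card_sf[OF sf_UNIV] by simp
  have "card P < card H" using P(4) cH Suc.prems Q2 by (simp add: power_strict_increasing)
  then have "\<not> H \<subseteq> P" using card_mono[of P H] by (auto simp: leD)
  then obtain v where v: "v \<in> H" "v \<notin> P" by blast
  have "card (addl P v) = CARD('a) ^ j" using addl_card[OF P(1) v(2)] P(4) Suc.prems by simp
  moreover have "S \<subseteq> addl P v" using addl_sup[OF P(1)] P(2) by blast
  moreover have "addl P v \<subseteq> H" using addl_le[OF H P(3) v(1)] .
  ultimately show ?case using addl_sub[OF P(1)] by blast
qed

lemma fiber_bound: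
  fixes U H :: "('a::{field,finite}^'k) set"
  assumes F: "is_subfield F" and U: "lin_subspace F U" and H: "lin_subspace UNIV H"
    and cov: "addl H w = UNIV"
  shows "card U \<le> CARD('a) * card (U \<inter> H)"
proof -
  define phi where "phi u = (SOME a. u - a *s w \<in> H)" for u
  have phi: "u - phi u *s w \<in> H" for u
  proof -
    have "u \<in> addl H w" using cov by simp
    then obtain h a where "h \<in> H" "u = h + a *s w" unfolding addl_def by blast
    then have "u - a *s w \<in> H" by simp
    then show ?thesis unfolding phi_def by (rule someI)
  qed
  define r where "r a = (SOME u. u \<in> U \<and> phi u = a)" for a
  have r: "r (phi u) \<in> U \<and> phi (r (phi u)) = phi u" if "u \<in> U" for u
  proof -
    have "u \<in> U \<and> phi u = phi u" using that by simp
    then show ?thesis unfolding r_def by (rule someI)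
  qed
  define g where "g u = (phi u, u - r (phi u))" for u
  have ij: "inj_on g U" by (rule inj_onI) (auto simp: g_def)
  have im: "g ` U \<subseteq> UNIV \<times> (U \<inter> H)"
  proof (clarsimp simp: g_def)
    fix u assume u: "u \<in> U"
    show "u - r (phi u) \<in> U \<and> u - r (phi u) \<in> H"
    proof
      show "u - r (phi u) \<in> U" using sub_diff[OF F U u] r[OF u] by blast
      have eq: "u - r (phi u) = (u - phi u *s w) - (r (phi u) - phi (r (phi u)) *s w)"
        using r[OF u] by simp
      show "u - r (phi u) \<in> H" by (subst eq) (rule sub_diff[OF sf_UNIV H phi phi])
    qed
  qed
  have "card U \<le> card ((UNIV::'a set) \<times> (U \<inter> H))" by (rule card_inj_on_le[OF ij im]) simp
  then show ?thesis by (simp add: card_cartesian_product)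
qed

lemma indep2:
  fixes P :: "('a::field^'k) set"
  assumes P: "lin_subspace UNIV P" and w1: "w1 \<notin> P" and w2: "w2 \<notin> addl P w1"
    and z: "al *s w1 + be *s w2 \<in> P"
  shows "al = 0 \<and> be = 0"
proof -
  have be: "be = 0"
  proof (rule ccontr)
    assume nz: "be \<noteq> 0"
    have "w2 = inverse be *s (al *s w1 + be *s w2) + (- (al * inverse be)) *s w1"
      using nz by (simp add: vec_eq_iff field_simps)
    moreover have "inverse be *s (al *s w1 + be *s w2) \<in> P" using P z unfolding lin_subspace_def by blast
    ultimately show False using w2 unfolding addl_def by blast
  qed
  moreover have "al = 0"
  proof (rule ccontr)
    assume nz: "al \<noteq> 0"
    have "w1 = inverse al *s (al *s w1)" using nz by (simp add: vector_smult_assoc)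
    moreover have "al *s w1 \<in> P" using z be by simp
    then have "inverse al *s (al *s w1) \<in> P" using P unfolding lin_subspace_def by blast
    ultimately show False using w1 by simp
  qed
  ultimately show ?thesis by simp
qed

lemma Hdisj:
  fixes P :: "('a::field^'k) set"
  assumes P: "lin_subspace UNIV P" and w1: "w1 \<notin> P" and w2: "w2 \<notin> addl P w1"
    and st: "s \<noteq> t" and xs: "x \<in> addl P (w1 + s *s w2)" and xt: "x \<in> addl P (w1 + t *s w2)"
  shows "x \<in> P"
proof -
  obtain p a where p: "p \<in> P" "x = p + a *s (w1 + s *s w2)" using xs unfolding addl_def by blast
  obtain p' b where p': "p' \<in> P" "x = p' + b *s (w1 + t *s w2)" using xt unfolding addl_def by blast
  have e1: "x - p = a *s w1 + (a * s) *s w2" using p(2) by (simp add: vec_eq_iff algebra_simps)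
  have e2: "x - p' = b *s w1 + (b * t) *s w2" using p'(2) by (simp add: vec_eq_iff algebra_simps)
  have "(a - b) *s w1 + (a * s - b * t) *s w2 = (x - p) - (x - p')"
    unfolding e1 e2 by (simp add: vec_eq_iff algebra_simps)
  also have "\<dots> = p' - p" by simp
  finally have "(a - b) *s w1 + (a * s - b * t) *s w2 \<in> P" using sub_diff[OF sf_UNIV P p'(1) p(1)] by simp
  from indep2[OF P w1 w2 this] have "a = b" "a * s = b * t" by auto
  then have "a * (s - t) = 0" by (simp add: algebra_simps)
  then have "a = 0" using st by simp
  then show ?thesis using p by simp
qed

lemma notinP:
  fixes P :: "('a::field^'k) set"
  assumes P: "lin_subspace UNIV P" and w1: "w1 \<notin> P" and w2: "w2 \<notin> addl P w1"
  shows "w1 + t *s w2 \<notin> P"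
  using indep2[OF P w1 w2, of 1 t] by auto



theorem theorem3p3:
  fixes F :: "'a::{field,finite} set" and U :: "('a^'k) set"
    and q m n :: nat
  assumes "\<exists>p e. prime p \<and> e > 0 \<and> q = p ^ e"
    and "m > 0" and "n > 0"
    and "is_subfield F" and "card F = q" and "CARD('a) = q ^ m"
    and "is_system F n U"
  shows "evasive F (int CARD('k) - 2) (int n - int m - 1) U \<longleftrightarrow> cutting U"
proof -
  note Fs = assms(4)
  define Q where "Q = CARD('a)"
  define k where "k = CARD('k)"
  have q2: "2 \<le> q" using card_sf[OF Fs] assms(5) by simp
  have Q2: "2 \<le> Q" using card_sf[OF sf_UNIV] unfolding Q_def by simp
  have Qq: "Q = q ^ m" using assms(6) Q_def by simp
  have k1: "k \<ge> 1" unfolding k_def by (simp add: Suc_leI)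
  have Usub: "lin_subspace F U" and Udim: "lin_dim F U = n" using assms(7) by (auto simp: is_system_def)
  have cU: "card U = q ^ n" using card_sub[OF Fs Usub] Udim assms(5) by simp
  have cV: "card (UNIV :: ('a^'k) set) = Q ^ k" unfolding Q_def k_def by simp
  have cdim: "card H = Q ^ lin_dim UNIV H" if "lin_subspace UNIV H" for H :: "('a^'k) set"
    using card_sub[OF sf_UNIV that] unfolding Q_def by simp
  have dim_of_card: "lin_dim UNIV H = j" if "lin_subspace UNIV H" "card H = Q ^ j" for H :: "('a^'k) set" and j
    using cdim[OF that(1)] that(2) Q2 by (simp add: power_inject_exp)
  have cFdim: "card (U \<inter> H) = q ^ lin_dim F (U \<inter> H)" if "lin_subspace UNIV H" for H
    using card_sub[OF Fs sub_Int[OF Usub sub_UNIV[OF that]]] assms(5) by simp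
  have Qlt: "Q ^ a < Q ^ b \<longleftrightarrow> a < b" for a b using Q2 by simp
  have qle: "q ^ a \<le> q ^ b \<longleftrightarrow> a \<le> b" for a b using q2 by simp
  have qlt: "q ^ a < q ^ b \<longleftrightarrow> a < b" for a b using q2 by simp
  have notU: "\<exists>w. w \<notin> H" if "card H < Q ^ k" for H :: "('a^'k) set"
  proof (rule ccontr)
    assume "\<nexists>w. w \<notin> H"
    then have "H = UNIV" by blast
    then show False using that cV by simp
  qed
  show ?thesis
  proof
    assume ev: "evasive F (int CARD('k) - 2) (int n - int m - 1) U"
    show "cutting U" unfolding cutting_def
    proof (intro allI impI)
      fix H :: "('a^'k) set"
      assume "lin_subspace UNIV H \<and> int (lin_dim UNIV H) = int CARD('k) - 1"
      then have H: "lin_subspace UNIV H" and dH: "lin_dim UNIV H = k - 1" unfolding k_def by auto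
      have cH: "card H = Q ^ (k - 1)" using cdim[OF H] dH by simp
      show "lin_span UNIV (H \<inter> U) = H"
      proof (rule ccontr)
        assume ne: "lin_span UNIV (H \<inter> U) \<noteq> H"
        define S where "S = lin_span UNIV (H \<inter> U)"
        have S: "lin_subspace UNIV S" unfolding S_def by (rule span_subspace[OF sf_UNIV])
        have SH: "S \<subseteq> H" unfolding S_def by (rule span_subset[OF H]) blast
        have "card S < card H" using SH ne unfolding S_def by (intro psubset_card_mono) auto
        then have aS: "lin_dim UNIV S < k - 1" using cdim[OF S] cH Qlt by simp
        have ex: "\<exists>P. lin_subspace UNIV P \<and> S \<subseteq> P \<and> P \<subseteq> H \<and> card P = CARD('a) ^ (k - 2)"
          by (rule chain[OF S H SH cdim[OF S, unfolded Q_def] cH[unfolded Q_def], of "k - 2" "k - 2 - lin_dim UNIV S"])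
            (use aS in linarith)+
        obtain P where P: "lin_subspace UNIV P" "S \<subseteq> P" "P \<subseteq> H" "card P = Q ^ (k - 2)"
          using ex unfolding Q_def by blast
        have dP: "int (lin_dim UNIV P) = int CARD('k) - 2"
          using dim_of_card[OF P(1) P(4)] aS unfolding k_def by simp
        have ev1: "int (lin_dim F (U \<inter> P)) \<le> int n - int m - 1"
          using ev P(1) dP unfolding evasive_def by blast
        have "H \<inter> U \<subseteq> S" unfolding S_def by (rule span_superset[OF sf_UNIV])
        then have UPH: "U \<inter> P = U \<inter> H" using P(2,3) by blast
        obtain w where w: "w \<notin> H" using notU[of H] cH Qlt k1 by auto
        have "card (addl H w) = Q ^ k" using addl_card[OF H w] cH k1 unfolding Q_def
          by (simp add: power_Suc2[symmetric])
        then have cov: "addl H w = UNIV" using cV by (intro card_seteq) auto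
        have "q ^ n \<le> Q * q ^ lin_dim F (U \<inter> H)"
          using fiber_bound[OF Fs Usub H cov] cU cFdim[OF H] unfolding Q_def by simp
        also have "\<dots> = q ^ (m + lin_dim F (U \<inter> H))" using Qq by (simp add: power_add)
        finally have "n \<le> m + lin_dim F (U \<inter> H)" using qle by simp
        then show False using ev1 UPH by simp
      qed
    qed
  next
    assume cut: "cutting U"
    show "evasive F (int CARD('k) - 2) (int n - int m - 1) U" unfolding evasive_def
    proof (intro allI impI)
      fix P :: "('a^'k) set"
      assume "lin_subspace UNIV P \<and> int (lin_dim UNIV P) = int CARD('k) - 2"
      then have P: "lin_subspace UNIV P" and dP: "lin_dim UNIV P = k - 2" and k2: "k \<ge> 2"
        unfolding k_def by auto
      have cP: "card P = Q ^ (k - 2)" using cdim[OF P] dP by simp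
      define d where "d = lin_dim F (U \<inter> P)"
      have cUP: "card (U \<inter> P) = q ^ d" using cFdim[OF P] d_def by simp
      show "int (lin_dim F (U \<inter> P)) \<le> int n - int m - 1"
      proof (rule ccontr)
        assume "\<not> ?thesis"
        then have nd: "n \<le> m + d" unfolding d_def by simp
        obtain w1 where w1: "w1 \<notin> P" using notU[of P] cP Qlt k2 by auto
        have c1: "card (addl P w1) = Q ^ (k - 1)" using addl_card[OF P w1] cP k2 unfolding Q_def
          by (simp add: power_Suc2[symmetric] Suc_diff_Suc numeral_2_eq_2)
        obtain w2 where w2: "w2 \<notin> addl P w1" using notU[of "addl P w1"] c1 Qlt k2 by auto
        define Ht where "Ht t = addl P (w1 + t *s w2)" for t
        define D where "D t = (U \<inter> Ht t) - P" for t
        have Hsub: "lin_subspace UNIV (Ht t)" for t unfolding Ht_def by (rule addl_sub[OF P])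
        have cHt: "card (Ht t) = Q ^ (k - 1)" for t
          using addl_card[OF P notinP[OF P w1 w2, of t]] cP k2 unfolding Q_def Ht_def
          by (simp add: power_Suc2[symmetric] Suc_diff_Suc numeral_2_eq_2)
        have PH: "P \<subseteq> Ht t" for t unfolding Ht_def by (rule addl_sup[OF P])
        have Dbig: "(q - 1) * q ^ d \<le> card (D t)" for t
        proof -
          have sp: "lin_span UNIV (Ht t \<inter> U) = Ht t"
            using cut Hsub[of t] dim_of_card[OF Hsub cHt] k2 unfolding cutting_def k_def by auto
          have "\<not> U \<inter> Ht t \<subseteq> P"
          proof
            assume "U \<inter> Ht t \<subseteq> P"
            then have "Ht t \<subseteq> P" using span_subset[OF sub_UNIV[OF P], of "Ht t \<inter> U" UNIV] sp by auto
            then have "card (Ht t) \<le> card P" by (simp add: card_mono)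
            then have "Q ^ (k - 1) \<le> Q ^ (k - 2)" using cHt cP by simp
            then have "k - 1 \<le> k - 2" using power_le_imp_le_exp[of Q "k - 1" "k - 2"] Q2 by simp
            then show False using k2 by simp
          qed
          then have "U \<inter> P \<subset> U \<inter> Ht t" using PH by blast
          then have "card (U \<inter> P) < card (U \<inter> Ht t)" by (simp add: psubset_card_mono)
          then have "d < lin_dim F (U \<inter> Ht t)" using cUP cFdim[OF Hsub] qlt by simp
          then have dl: "Suc d \<le> lin_dim F (U \<inter> Ht t)" by simp
          have "q ^ Suc d \<le> q ^ lin_dim F (U \<inter> Ht t)" by (rule power_increasing[OF dl]) (use q2 in simp)
          then have "q ^ Suc d \<le> card (U \<inter> Ht t)" using cFdim[OF Hsub, of t] by simp
          moreover have "card (D t) = card (U \<inter> Ht t) - card (U \<inter> P)"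
            unfolding D_def using PH[of t] by (simp add: card_Diff_subset_Int Int_assoc Int_absorb2 Int_commute[of "Ht t"])
          ultimately show ?thesis using cUP by (simp add: diff_mult_distrib)
        qed
        have disj: "D s \<inter> D t = {}" if "s \<noteq> t" for s t
          using Hdisj[OF P w1 w2 that] unfolding D_def Ht_def by blast
        have "Q * ((q - 1) * q ^ d) \<le> (\<Sum>t\<in>UNIV. card (D t))"
          using sum_bounded_below[of UNIV "(q - 1) * q ^ d" "\<lambda>t. card (D t)"] Dbig unfolding Q_def by simp
        also have "\<dots> = card (\<Union>t. D t)" by (rule card_UN_disjoint[symmetric]) (simp_all add: disj)
        also have "\<dots> \<le> card (U - (U \<inter> P))" unfolding D_def by (intro card_mono) auto
        also have "\<dots> = q ^ n - q ^ d" using cU cUP by (simp add: card_Diff_subset)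
        also have "\<dots> \<le> q ^ (m + d) - q ^ d" using nd qle by (intro diff_le_mono) simp
        also have "\<dots> = Q * q ^ d - q ^ d" using Qq by (simp add: power_add)
        finally have ineq: "Q * ((q - 1) * q ^ d) \<le> Q * q ^ d - q ^ d" .
        have q1: "1 \<le> q - 1" using q2 by linarith
        have "q ^ d \<le> (q - 1) * q ^ d" using mult_le_mono1[OF q1, of "q ^ d"] by simp
        then have "Q * q ^ d \<le> Q * ((q - 1) * q ^ d)" by (rule mult_le_mono2)
        then have le2: "Q * q ^ d \<le> Q * q ^ d - q ^ d" using ineq by (rule order_trans)
        have "0 < q ^ d" using q2 by simp
        have Yle: "q ^ d \<le> Q * q ^ d" using Q2 by simp
        show False using le2 Yle \<open>0 < q ^ d\<close> by (simp add: le_diff_conv2)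
      qed
    qed
  qed
qed

end
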